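(* Let $h$ and $k$ be relatively prime odd integers with $k>0$. Then $$B_{1}(h,k)=\frac{2h}{\pi}\sum_{\substack{n=1\\ 2n-1\not\equiv 0 \pmod{k}}}^{\infty}\frac{1}{2n-1}\tan\left(\frac{\pi h(2n-1)}{2k}\right)+\frac{1}{2k}-\frac{1}{2}.$$
   Context: $[x]$ denotes the greatest integer $\le x$. For integers $h,k$ with $k>0$ and $\gcd(h,k)=1$, $$B_{1}(h,k)=\sum_{j=1}^{k-1}(-1)^{j+\left[\frac{hj}{k}\right]}\left[\frac{hj}{k}\right].$$ *)

theory Defs
  imports Complex_Main
begin

definition B1 :: "int \<Rightarrow> int \<Rightarrow> int" where
  "B1 h k = (\<Sum>j = 1..k-1. (if even (j + \<lfloor>real_of_int (h*j) / real_of_int k\<rfloor>) then 1 else -1)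
                              * \<lfloor>real_of_int (h*j) / real_of_int k\<rfloor>)"

end

theory Submission
  imports Defs "HOL-Analysis.Analysis"
begin


lemma Im_Ln_pos_cis:
  assumes "0 < r" "-pi < t" "t \<le> pi"
  shows "Im (Ln (complex_of_real r * cis t)) = t"
proof -
  have "Ln (complex_of_real r * cis t) = Ln (complex_of_real r) + Ln (cis t)"
    using assms by (intro Ln_times_of_real) auto
  moreover have "Ln (cis t) = \<i> * complex_of_real t"
    using assms by (simp add: cis_conv_exp Ln_exp mult.commute)
  moreover have "Im (Ln (complex_of_real r)) = 0"
    using assms by (simp add: Ln_of_real)
  ultimately show ?thesis by simp
qed

lemma sw_limit_value:
  assumes "0 < x" "x < pi"
  shows "Im ((Ln (1 + cis x) - Ln (1 - cis x)) / 2) = pi / 4"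
proof -
  have c: "cos (x/2) > 0" using assms by (intro cos_gt_zero_pi) auto
  have s: "sin (x/2) > 0" using assms by (intro sin_gt_zero) auto
  have e1: "1 + cis x = complex_of_real (2 * cos (x/2)) * cis (x/2)"
  proof -
    have a: "sin (x/2) * sin (x/2) = 1 - cos (x/2) * cos (x/2)"
      using sin_cos_squared_add3[of "x/2"] by linarith
    show ?thesis using cos_double[of "x/2"] sin_double[of "x/2"] a
      by (simp add: complex_eq_iff power2_eq_square algebra_simps)
  qed
  have e2: "1 - cis x = complex_of_real (2 * sin (x/2)) * cis (x/2 - pi/2)"
  proof -
    have a: "cos (x/2) * cos (x/2) = 1 - sin (x/2) * sin (x/2)"
      using sin_cos_squared_add3[of "x/2"] by linarith
    show ?thesis using cos_double[of "x/2"] sin_double[of "x/2"] a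
      by (simp add: complex_eq_iff cos_diff sin_diff power2_eq_square algebra_simps)
  qed
  have "Im (Ln (1 + cis x)) = x/2" unfolding e1
    using c assms by (intro Im_Ln_pos_cis) auto
  moreover have "Im (Ln (1 - cis x)) = x/2 - pi/2" unfolding e2
    using s assms by (intro Im_Ln_pos_cis) auto
  ultimately show ?thesis by simp
qed

lemma sw_deriv:
  fixes z w :: complex and N :: nat
  assumes ne1: "1 + w*z \<noteq> 0" and ne2: "1 - w*z \<noteq> 0"
    and r1: "1 + w*z \<notin> \<real>\<^sub>\<le>\<^sub>0" and r2: "1 - w*z \<notin> \<real>\<^sub>\<le>\<^sub>0"
  shows "((\<lambda>w. (\<Sum>n<N. (w*z)^(2*n+1) / of_nat (2*n+1)) - (Ln (1 + w*z) - Ln (1 - w*z)) / 2)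
           has_field_derivative (- z * ((w*z)^2)^N / (1 - (w*z)^2))) (at w)"
proof -
  define q where "q = (w*z)^2"
  have q1: "1 - q = (1 - w*z) * (1 + w*z)" unfolding q_def by (simp add: power2_eq_square algebra_simps)
  have qn: "q \<noteq> 1" using q1 ne1 ne2 by auto
  have d1: "((\<lambda>w. \<Sum>n<N. (w*z)^(2*n+1) / of_nat (2*n+1)) has_field_derivative
              (\<Sum>n<N. z * q^n)) (at w)"
  proof (rule DERIV_sum)
    fix n assume "n \<in> {..<N}"
    have "((\<lambda>w. (z^(2*n+1) / of_nat (2*n+1)) * w^Suc (2*n)) has_field_derivative
            (z^(2*n+1) / of_nat (2*n+1)) * ((1 + of_nat (2*n)) * (1 * w^(2*n)))) (at w)"
      by (intro DERIV_cmult DERIV_power_Suc DERIV_ident)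
    moreover have "(z^(2*n+1) / of_nat (2*n+1)) * ((1 + of_nat (2*n)) * (1 * w^(2*n))) = z * q^n"
    proof -
      have c: "(1 + of_nat (2*n) :: complex) = of_nat (2*n+1)" by simp
      have c0: "(of_nat (2*n+1) :: complex) \<noteq> 0" by (simp only: of_nat_eq_0_iff)
      have "(z^(2*n+1) / of_nat (2*n+1)) * ((1 + of_nat (2*n)) * (1 * w^(2*n))) = z^(2*n+1) * w^(2*n)"
        unfolding c using c0 by simp
      also have "\<dots> = z * q^n" unfolding q_def
        by (simp add: power_mult[symmetric] power_mult_distrib)
      finally show ?thesis .
    qed
    moreover have "(\<lambda>w. (z^(2*n+1) / of_nat (2*n+1)) * w^Suc (2*n)) = (\<lambda>w. (w*z)^(2*n+1) / of_nat (2*n+1))"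
      by (simp add: power_mult_distrib field_simps)
    ultimately show "((\<lambda>w. (w*z)^(2*n+1) / of_nat (2*n+1)) has_field_derivative z * q^n) (at w)"
      by simp
  qed
  have d2: "((\<lambda>w. (Ln (1 + w*z) - Ln (1 - w*z)) / 2) has_field_derivative
              ((inverse (1 + w*z) * z - inverse (1 - w*z) * (- z)) / 2)) (at w)"
    using r1 r2 by (auto intro!: derivative_eq_intros)
  have e2: "(inverse (1 + w*z) * z - inverse (1 - w*z) * (- z)) / 2 = z / (1 - q)"
  proof -
    have "(inverse (1 + w*z) * z - inverse (1 - w*z) * (- z)) / 2 = z / ((1 - w*z) * (1 + w*z))"
    proof -
      have i: "inverse (1 + w*z) + inverse (1 - w*z) = 2 / ((1 - w*z) * (1 + w*z))"
        using ne1 ne2 by (simp add: inverse_eq_divide divide_simps)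
      have "(inverse (1 + w*z) * z - inverse (1 - w*z) * (- z)) / 2 = z * (inverse (1 + w*z) + inverse (1 - w*z)) / 2"
        by (simp add: algebra_simps)
      then show ?thesis unfolding i by simp
    qed
    then show ?thesis using q1 by simp
  qed
  have e1: "(\<Sum>n<N. z * q^n) = z * (1 - q^N) / (1 - q)"
    using qn by (simp add: sum_distrib_left[symmetric] sum_gp_strict)
  have "z * (1 - q^N) / (1 - q) - z / (1 - q) = (z * (1 - q^N) - z) / (1 - q)"
    by (simp add: diff_divide_distrib)
  also have "z * (1 - q^N) - z = - z * q^N" by (simp add: algebra_simps)
  finally have "z * (1 - q^N) / (1 - q) - z / (1 - q) = - z * q^N / (1 - q)" .
  then have eq: "(\<Sum>n<N. z * q^n) - (inverse (1 + w*z) * z - inverse (1 - w*z) * (- z)) / 2 = - z * q^N / (1 - q)"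
    unfolding e1 e2 .
  have D: "((\<lambda>w. (\<Sum>n<N. (w*z)^(2*n+1) / of_nat (2*n+1)) - (Ln (1 + w*z) - Ln (1 - w*z)) / 2)
           has_field_derivative (- z * q^N / (1 - q))) (at w)"
    using DERIV_diff[OF d1 d2] unfolding eq .
  then show ?thesis unfolding q_def .
qed

lemma square_wave:
  assumes x0: "0 < x" and xpi: "x < pi"
  shows "(\<lambda>n. sin ((2 * real n + 1) * x) / (2 * real n + 1)) sums (pi / 4)"
proof -
  define z where "z = cis x"
  define c where "c = 1 - \<bar>cos x\<bar>"
  have sx: "sin x > 0" using x0 xpi by (intro sin_gt_zero)
  have "(cos x)^2 < 1" using sin_cos_squared_add[of x] sx
    by (smt (verit) zero_less_power)
  then have "\<bar>cos x\<bar> < 1" by (simp add: abs_square_less_1)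
  then have cpos: "c > 0" unfolding c_def by simp
  define A where "A = (Ln (1 + z) - Ln (1 - z)) / 2"
  define P where "P N = (\<Sum>n<N. z^(2*n+1) / of_nat (2*n+1))" for N
  define F where "F N w = (\<Sum>n<N. (w*z)^(2*n+1) / of_nat (2*n+1)) - (Ln (1 + w*z) - Ln (1 - w*z)) / 2" for N w
  have nz: "norm z = 1" unfolding z_def by simp
  have re1: "Re (1 + complex_of_real r * z) \<ge> c" and re2: "Re (1 - complex_of_real r * z) \<ge> c"
    if "r \<in> {0..1}" for r
  proof -
    have "\<bar>r * cos x\<bar> \<le> \<bar>cos x\<bar>" using that by (auto simp: abs_mult intro: mult_left_le_one_le)
    then show "Re (1 + complex_of_real r * z) \<ge> c" "Re (1 - complex_of_real r * z) \<ge> c"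
      unfolding c_def z_def by (auto simp: cis.sel)
  qed
  have bound: "N \<ge> 0 \<Longrightarrow> norm (P N - A) \<le> 1 / ((2 * real N + 1) * c^2)" for N :: nat
  proof -
    define D where "D r = - z * ((complex_of_real r * z)^2)^N / (1 - (complex_of_real r * z)^2)" for r :: real
    have der: "((\<lambda>r. F N (complex_of_real r)) has_vector_derivative D r) (at r within {0..1})"
      if "r \<in> {0..1}" for r
    proof -
      have a1: "Re (1 + complex_of_real r * z) > 0" "Re (1 - complex_of_real r * z) > 0"
        using re1[OF that] re2[OF that] cpos by linarith+
      have "(F N has_field_derivative D r) (at (complex_of_real r))"
        unfolding F_def D_def
        by (rule sw_deriv) (use a1 in \<open>auto simp: complex_nonpos_Reals_iff complex_eq_iff\<close>)
      then show ?thesis by (rule has_vector_derivative_real_field)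
    qed
    have I1: "(D has_integral (F N (complex_of_real 1) - F N (complex_of_real 0))) {0..1}"
      using fundamental_theorem_of_calculus[of 0 1 "\<lambda>r. F N (complex_of_real r)" D] der by simp
    define g where "g r = r^(2*N) / c^2" for r :: real
    have I2: "(g has_integral (1 / ((2 * real N + 1) * c^2))) {0..1}"
    proof -
      have "((\<lambda>r. r^(Suc (2*N)) / ((2 * real N + 1) * c^2)) has_vector_derivative g r) (at r within {0..1})" for r
      proof -
        have "((\<lambda>r. r^(Suc (2*N)) / ((2 * real N + 1) * c^2)) has_real_derivative
               ((1 + real (2*N)) * (1 * r^(2*N))) / ((2 * real N + 1) * c^2)) (at r within {0..1})"
          by (intro DERIV_cdivide DERIV_power_Suc DERIV_ident)
        moreover have "((1 + real (2*N)) * (1 * r^(2*N))) / ((2 * real N + 1) * c^2) = g r"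
        proof -
          have "((1 + real (2*N)) * (1 * r^(2*N))) / ((2 * real N + 1) * c^2)
                = ((2 * real N + 1) * r^(2*N)) / ((2 * real N + 1) * c^2)" by (simp add: add.commute)
          also have "\<dots> = r^(2*N) / c^2"
            by (rule mult_divide_mult_cancel_left) (smt (verit) of_nat_0_le_iff)
          finally show ?thesis unfolding g_def .
        qed
        ultimately show ?thesis by (simp add: has_real_derivative_iff_has_vector_derivative)
      qed
      from fundamental_theorem_of_calculus[of 0 1 _ g, OF _ this]
      show ?thesis by simp
    qed
    have nb: "norm (D r) \<le> g r" if "r \<in> {0..1}" for r
    proof -
      have n1: "norm (1 - complex_of_real r * z) \<ge> c" "norm (1 + complex_of_real r * z) \<ge> c"
        using re1[OF that] re2[OF that] complex_Re_le_cmod by (metis order_trans)+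
      have "norm (1 - (complex_of_real r * z)^2) = norm (1 - complex_of_real r * z) * norm (1 + complex_of_real r * z)"
        by (simp add: power2_eq_square algebra_simps flip: norm_mult)
      also have "\<dots> \<ge> c * c" using n1 cpos by (intro mult_mono) auto
      finally have den: "norm (1 - (complex_of_real r * z)^2) \<ge> c^2" by (simp add: power2_eq_square)
      have num: "norm (- z * ((complex_of_real r * z)^2)^N) = r^(2*N)"
        using that nz by (simp add: norm_mult norm_power power_mult[symmetric] abs_of_nonneg)
      have "norm (D r) = r^(2*N) / norm (1 - (complex_of_real r * z)^2)"
        unfolding D_def norm_divide num ..
      also have "\<dots> \<le> r^(2*N) / c^2"
      proof -
        have c2: "c^2 > 0" using cpos by simp
        then have "norm (1 - (complex_of_real r * z)^2) > 0" using den by linarith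
        then show ?thesis using den c2 that by (intro divide_left_mono) auto
      qed
      finally show ?thesis unfolding g_def .
    qed
    have "norm (integral {0..1} D) \<le> integral {0..1} g"
      using I1 I2 nb by (intro integral_norm_bound_integral) (auto simp: has_integral_integrable)
    moreover have "integral {0..1} D = F N 1 - F N 0" using I1 by (simp add: integral_unique)
    moreover have "integral {0..1} g = 1 / ((2 * real N + 1) * c^2)" using I2 by (simp add: integral_unique)
    moreover have "F N 0 = 0" unfolding F_def by simp
    moreover have "F N 1 = P N - A" unfolding F_def P_def A_def by simp
    ultimately show ?thesis by simp
  qed
  have "(\<lambda>N. P N - A) \<longlonglongrightarrow> 0"
  proof (rule Lim_null_comparison)
    show "\<forall>\<^sub>F N in sequentially. norm (P N - A) \<le> inverse (real (Suc N)) / c^2"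
    proof (intro always_eventually allI)
      fix N :: nat
      have c2: "c^2 > 0" using cpos by simp
      have "1 / ((2 * real N + 1) * c^2) \<le> 1 / ((real N + 1) * c^2)"
        using c2 by (intro divide_left_mono mult_right_mono mult_pos_pos) auto
      also have "\<dots> = inverse (real (Suc N)) / c^2" by (simp add: field_simps)
      finally have "1 / ((2 * real N + 1) * c^2) \<le> inverse (real (Suc N)) / c^2" .
      then show "norm (P N - A) \<le> inverse (real (Suc N)) / c^2" using bound[of N] by simp
    qed
    show "(\<lambda>N. inverse (real (Suc N)) / c^2) \<longlonglongrightarrow> 0"
      using tendsto_divide_zero[OF LIMSEQ_inverse_real_of_nat, of "c^2"] by simp
  qed
  then have "P \<longlonglongrightarrow> A" by (rule LIM_zero_cancel)
  then have "(\<lambda>N. Im (P N)) \<longlonglongrightarrow> Im A" by (rule tendsto_Im)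
  moreover have "Im A = pi / 4" unfolding A_def z_def using sw_limit_value x0 xpi by simp
  moreover have "Im (P N) = (\<Sum>n<N. sin ((2 * real n + 1) * x) / (2 * real n + 1))" for N
  proof -
    have h: "Im (cis x ^ (2*n+1) / of_nat (2*n+1)) = sin ((2 * real n + 1) * x) / (2 * real n + 1)" for n
    proof -
      have "Im (cis x ^ (2*n+1) / of_nat (2*n+1)) = Im (cis x ^ (2*n+1)) / real (2*n+1)"
        by (rule Im_divide_of_nat)
      also have "\<dots> = Im (cis (real (2*n+1) * x)) / real (2*n+1)"
        by (simp only: Complex.DeMoivre)
      also have "\<dots> = sin ((2 * real n + 1) * x) / (2 * real n + 1)"
        by (simp add: add.commute)
      finally show ?thesis .
    qed
    show ?thesis by (simp only: P_def z_def Im_sum h)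
  qed
  ultimately show ?thesis unfolding sums_def by simp
qed



lemma jsum_closed:
  fixes v :: complex
  shows "(1 - v)^2 * (\<Sum>j<K. of_nat j * v^j) = v - of_nat K * v^K + (of_nat K - 1) * v^(K+1)"
proof (induction K)
  case 0 then show ?case by simp
next
  case (Suc K)
  have "(1 - v)^2 * (\<Sum>j<Suc K. of_nat j * v^j) = (1 - v)^2 * (\<Sum>j<K. of_nat j * v^j) + (1 - v)^2 * (of_nat K * v^K)"
    by (simp add: algebra_simps)
  also have "\<dots> = v - of_nat K * v^K + (of_nat K - 1) * v^(K+1) + (1 - v)^2 * (of_nat K * v^K)"
    using Suc by simp
  also have "\<dots> = v - of_nat (Suc K) * v^(Suc K) + (of_nat (Suc K) - 1) * v^(Suc K + 1)"
    by (simp add: power2_eq_square algebra_simps)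
  finally show ?case .
qed

lemma tan_finite:
  fixes t :: real and K :: nat
  assumes K: "odd K" and c: "cos t \<noteq> 0" and uK: "cis (2 * t) ^ K = -1"
  shows "tan t = 2 / real K * (\<Sum>j<K. (-1)^j * real j * sin (2 * real j * t))"
proof -
  define u where "u = cis (2 * t)"
  define v where "v = - u"
  define S where "S = (\<Sum>j<K. of_nat j * v^j)"
  have K0: "K > 0" using K by (cases K) auto
  have vK: "v^K = 1" unfolding v_def using uK K by (simp add: power_minus' u_def)
  have sq1: "sin t * sin t = 1 - cos t * cos t" "cos t * cos t = 1 - sin t * sin t"
    using sin_cos_squared_add3[of t] by linarith+
  have up1: "u + 1 = 2 * complex_of_real (cos t) * cis t"
    unfolding u_def
    using cos_double[of t] sin_double[of t] sq1(1)
    by (simp add: complex_eq_iff power2_eq_square algebra_simps)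
  have um1: "u - 1 = \<i> * complex_of_real (tan t) * (u + 1)"
  proof -
    have "u - 1 = 2 * \<i> * complex_of_real (sin t) * cis t"
      unfolding u_def
      using cos_double[of t] sin_double[of t] sq1(2)
      by (simp add: complex_eq_iff power2_eq_square algebra_simps)
    also have "\<dots> = \<i> * complex_of_real (tan t) * (2 * complex_of_real (cos t) * cis t)"
      using c by (simp add: tan_def field_simps)
    finally show ?thesis unfolding up1 .
  qed
  have u1: "u + 1 \<noteq> 0" unfolding up1 using c by simp
  have v1: "1 - v \<noteq> 0" using u1 unfolding v_def by (simp add: add.commute)
  have "(1 - v)^2 * S = of_nat K * (v - 1)"
    unfolding S_def jsum_closed using vK by (simp add: algebra_simps)
  then have "(1 - v) * ((1 - v) * S + of_nat K) = 0"
    by (simp add: power2_eq_square algebra_simps)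
  then have "(1 - v) * S + of_nat K = 0" using v1 by simp
  then have "S = - of_nat K / (1 - v)"
    using v1 by (simp add: field_simps)
  then have S': "S = - of_nat K / (u + 1)" unfolding v_def by (simp add: add.commute)
  have A: "\<i> * complex_of_real (tan t) = (u - 1) / (u + 1)" using um1 u1 by (simp add: field_simps)
  have B: "(u - 1) / (u + 1) = 1 - 2 / (u + 1)"
  proof -
    have "1 - 2 / (u + 1) = (u + 1) / (u + 1) - 2 / (u + 1)" using u1 by simp
    also have "\<dots> = ((u + 1) - 2) / (u + 1)" by (rule diff_divide_distrib[symmetric])
    finally show ?thesis by simp
  qed
  have Kn: "(of_nat K :: complex) \<noteq> 0" using K0 by simp
  have gen: "\<And>k w. (k::complex) \<noteq> 0 \<Longrightarrow> w \<noteq> 0 \<Longrightarrow> 2 * (- k / w) / k = - (2 / w)"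
    by (simp add: field_simps)
  have C: "2 * S / of_nat K = - (2 / (u + 1))"
    unfolding S' by (rule gen[OF Kn u1])
  have D: "\<i> * complex_of_real (tan t) = 1 + 2 * S / of_nat K"
    unfolding A B C by simp
  have "tan t = Im (1 + 2 * S / of_nat K)" unfolding D[symmetric] by simp
  then have "tan t = 2 * Im S / real K" by (simp add: Im_divide_of_nat)
  moreover have "Im S = (\<Sum>j<K. (-1)^j * real j * sin (2 * real j * t))"
  proof -
    have h: "Im (of_nat j * v^j) = (-1)^j * real j * sin (2 * real j * t)" for j
    proof -
      have "v^j = (-1)^j * cis (2*t)^j" unfolding v_def u_def by (rule power_minus)
      also have "cis (2*t)^j = cis (real j * (2 * t))" by (rule Complex.DeMoivre)
      also have "(-1::complex)^j = complex_of_real ((-1)^j)"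
        by (simp only: of_real_power of_real_minus of_real_1)
      finally have e: "of_nat j * v^j = complex_of_real (real j * (-1)^j) * cis (real j * (2 * t))"
        by (simp only: of_real_mult of_real_of_nat_eq mult.assoc)
      show ?thesis unfolding e by (simp add: mult_ac)
    qed
    show ?thesis unfolding S_def Im_sum h ..
  qed
  ultimately show ?thesis by simp
qed



definition esgn :: "int \<Rightarrow> int" where "esgn m = (if even m then 1 else -1)"

lemma alt_sum: "2 * (\<Sum>r<2*m+1. esgn (int r) * int r) = int (2*m+1) - 1"
proof (induction m)
  case 0 then show ?case by simp
next
  case (Suc m)
  have "{..<2 * Suc m + 1} = insert (2*m+2) (insert (2*m+1) {..<2*m+1})" by auto
  then have "(\<Sum>r<2*Suc m+1. esgn (int r) * int r) = esgn (int (2*m+2)) * int (2*m+2) + esgn (int (2*m+1)) * int (2*m+1) + (\<Sum>r<2*m+1. esgn (int r) * int r)"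
    by simp
  also have "esgn (int (2*m+2)) = 1" unfolding esgn_def by simp
  also have "esgn (int (2*m+1)) = -1" unfolding esgn_def by simp
  finally show ?case using Suc by simp
qed

lemma B1_identity:
  fixes h k :: int and K :: nat
  assumes "odd h" "odd k" "k > 0" "coprime h k" "k = int K"
  shows "2 * k * (\<Sum>j<K. esgn (int j + (h * int j) div k) * ((h * int j) div k))
         = 2 * h * (\<Sum>j<K. esgn (int j + (h * int j) div k) * int j) + 1 - k"
proof -
  define q where "q j = (h * int j) div k" for j
  define r where "r j = (h * int j) mod k" for j
  have hr: "h * int j = k * q j + r j" for j unfolding q_def r_def by simp
  have par: "esgn (int j + q j) = esgn (r j)" for j
  proof -
    have "even (int j + q j) \<longleftrightarrow> even (r j)"
    proof -
      have "even (h * int j) \<longleftrightarrow> even (int j)" using assms(1) by simp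
      moreover have "even (k * q j) \<longleftrightarrow> even (q j)" using assms(2) by simp
      moreover have "even (h * int j) \<longleftrightarrow> (even (k * q j) \<longleftrightarrow> even (r j))"
        unfolding hr by simp
      ultimately show ?thesis by simp blast
    qed
    then show ?thesis unfolding esgn_def by simp
  qed
  have "h * (\<Sum>j<K. esgn (int j + q j) * int j) = (\<Sum>j<K. esgn (int j + q j) * (h * int j))"
    by (simp add: sum_distrib_left algebra_simps)
  also have "\<dots> = k * (\<Sum>j<K. esgn (int j + q j) * q j) + (\<Sum>j<K. esgn (r j) * r j)"
    unfolding hr par by (simp add: sum.distrib sum_distrib_left algebra_simps)
  finally have main: "h * (\<Sum>j<K. esgn (int j + q j) * int j) = k * (\<Sum>j<K. esgn (int j + q j) * q j) + (\<Sum>j<K. esgn (r j) * r j)" .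
  define f where "f j = nat (r j)" for j
  have rnn: "0 \<le> r j" "r j < k" for j unfolding r_def using assms(3) by auto
  have fr: "int (f j) = r j" for j unfolding f_def using rnn by simp
  have inj: "inj_on f {..<K}"
  proof
    fix a b assume a: "a \<in> {..<K}" and b: "b \<in> {..<K}" and e: "f a = f b"
    then have "r a = r b" using fr by metis
    then have "k dvd h * (int a - int b)" unfolding r_def
      by (metis mod_eq_dvd_iff right_diff_distrib)
    then have "k dvd (int a - int b)" using assms(4)
      by (metis coprime_commute coprime_dvd_mult_right_iff)
    moreover have "\<bar>int a - int b\<bar> < k" using a b assms(5) by auto
    ultimately have "int a - int b = 0"
      using dvd_imp_le_int[of "int a - int b" k] assms(3) by (cases "int a - int b = 0") auto
    then show "a = b" by simp
  qed
  have sub: "f ` {..<K} \<subseteq> {..<K}"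
  proof
    fix y assume "y \<in> f ` {..<K}"
    then obtain j where y: "y = f j" by auto
    have "int y < int K" using y fr rnn(2)[of j] assms(5) by simp
    then show "y \<in> {..<K}" by simp
  qed
  have img: "f ` {..<K} = {..<K}" by (rule endo_inj_surj[OF _ sub inj]) simp
  have "(\<Sum>j<K. esgn (r j) * r j) = (\<Sum>j<K. esgn (int (f j)) * int (f j))" by (simp add: fr)
  also have "\<dots> = (\<Sum>s\<in>f ` {..<K}. esgn (int s) * int s)"
    by (rule sum.reindex[OF inj, symmetric, unfolded comp_def])
  also have "\<dots> = (\<Sum>s<K. esgn (int s) * int s)" unfolding img ..
  finally have rs: "(\<Sum>j<K. esgn (r j) * r j) = (\<Sum>s<K. esgn (int s) * int s)" .
  obtain m where m: "K = 2*m+1" using assms(2,5) by (metis oddE even_of_nat)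
  have "2 * (\<Sum>j<K. esgn (r j) * r j) = 2 * (\<Sum>s<K. esgn (int s) * int s)" using rs by simp
  also have "\<dots> = int K - 1" using alt_sum[of m] unfolding m .
  finally have "2 * (\<Sum>j<K. esgn (r j) * r j) = k - 1" using assms(5) by simp
  then show ?thesis using main unfolding q_def by (simp add: algebra_simps)
qed



lemma cos_int_pi: "cos (real_of_int m * pi) = (if even m then 1 else -1)"
proof -
  have "cos (real_of_int m * pi) = cos (real (nat \<bar>m\<bar>) * pi)"
  proof -
    have "real_of_int m * pi = real (nat \<bar>m\<bar>) * pi \<or> real_of_int m * pi = - (real (nat \<bar>m\<bar>) * pi)"
      by (cases "m \<ge> 0") auto
    then show ?thesis by (metis cos_minus)
  qed
  also have "\<dots> = (-1) ^ nat \<bar>m\<bar>" by (rule cos_npi)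
  also have "\<dots> = (if even m then 1 else -1)"
    by (cases "even m") (simp_all add: even_nat_iff)
  finally show ?thesis .
qed

lemma sin_int_pi: "sin (real_of_int m * pi) = 0"
  by (simp add: sin_times_pi_eq_0)

lemma sw_general:
  fixes a k :: int
  assumes k: "k > 0" and nd: "\<not> k dvd a"
  shows "(\<lambda>n. sin ((2 * real n + 1) * (pi * real_of_int a / real_of_int k)) / (2 * real n + 1))
           sums (real_of_int (esgn (a div k)) * (pi / 4))"
proof -
  define q where "q = a div k"
  define r where "r = a mod k"
  have a: "a = k * q + r" unfolding q_def r_def by simp
  have r0: "r > 0" unfolding r_def using k nd by (simp add: dvd_eq_mod_eq_0 order_le_neq_trans)
  have rk: "r < k" unfolding r_def using k by simp
  define y where "y = pi * real_of_int r / real_of_int k"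
  have y0: "0 < y" unfolding y_def using r0 k by simp
  have yp: "y < pi" unfolding y_def using rk k by (simp add: divide_less_eq)
  have eq: "sin ((2 * real n + 1) * (pi * real_of_int a / real_of_int k)) / (2 * real n + 1)
          = real_of_int (esgn q) * (sin ((2 * real n + 1) * y) / (2 * real n + 1))" for n
  proof -
    have "(2 * real n + 1) * (pi * real_of_int a / real_of_int k)
          = (2 * real n + 1) * y + real_of_int ((2 * int n + 1) * q) * pi"
      unfolding y_def a using k by (simp add: field_simps)
    then have "sin ((2 * real n + 1) * (pi * real_of_int a / real_of_int k))
          = sin ((2 * real n + 1) * y) * (if even ((2 * int n + 1) * q) then 1 else -1)"
      by (simp only: sin_add sin_int_pi cos_int_pi)
    also have "(if even ((2 * int n + 1) * q) then 1 else -1) = real_of_int (esgn q)"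
      unfolding esgn_def by simp
    finally show ?thesis by simp
  qed
  show ?thesis unfolding eq q_def[symmetric]
    by (rule sums_mult[OF square_wave[OF y0 yp]])
qed


lemma B1_as_nat_sum:
  fixes h k :: int and K :: nat
  assumes kK: "k = int K" and K0: "K > 0"
  shows "B1 h k = (\<Sum>j<K. esgn (int j + (h * int j) div k) * ((h * int j) div k))"
proof -
  define F where "F j = esgn (j + (h * j) div k) * ((h * j) div k)" for j :: int
  have "B1 h k = (\<Sum>j\<in>{1..k-1}. F j)"
    unfolding B1_def F_def esgn_def floor_divide_of_int_eq by simp
  also have "{1..k-1} = int ` {1..<K}"
  proof
    show "{1..k-1} \<subseteq> int ` {1..<K}"
    proof
      fix y assume y: "y \<in> {1..k-1}"
      then have "y = int (nat y)" "nat y \<in> {1..<K}" using kK by auto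
      then show "y \<in> int ` {1..<K}" by (metis imageI)
    qed
    show "int ` {1..<K} \<subseteq> {1..k-1}" using kK by auto
  qed
  also have "(\<Sum>j\<in>int ` {1..<K}. F j) = (\<Sum>j\<in>{1..<K}. F (int j))"
    by (rule sum.reindex_cong[of int]) auto
  also have "\<dots> = (\<Sum>j<K. F (int j))"
  proof -
    have "(\<Sum>j<K. F (int j)) = (\<Sum>j\<in>{0..<K}. F (int j))" by (simp add: lessThan_atLeast0)
    also have "\<dots> = F (int 0) + (\<Sum>j\<in>{Suc 0..<K}. F (int j))" using K0 by (rule sum.atLeast_Suc_lessThan)
    also have "F (int 0) = 0" unfolding F_def by simp
    finally show ?thesis by simp
  qed
  finally show ?thesis unfolding F_def by simp
qed

theorem theorem22:
  fixes h k :: int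
  assumes "odd h" and "odd k" and "k > 0" and "coprime h k"
  shows "summable (\<lambda>n::nat. if (2 * int n + 1) mod k = 0 then 0
            else tan (pi * real_of_int h * (2 * real n + 1) / (2 * real_of_int k)) / (2 * real n + 1))
    \<and> real_of_int (B1 h k) =
        2 * real_of_int h / pi *
          (\<Sum>n. if (2 * int n + 1) mod k = 0 then 0
                else tan (pi * real_of_int h * (2 * real n + 1) / (2 * real_of_int k)) / (2 * real n + 1))
        + 1 / (2 * real_of_int k) - 1 / 2"
proof -
  define K where "K = nat k"
  have kK: "k = int K" using assms(3) unfolding K_def by simp
  have Kodd: "odd K" using assms(2) kK by simp
  have K0: "K > 0" using assms(3) kK by simp
  have rk: "real_of_int k = real K" using kK by simp
  define T where "T = (\<lambda>n::nat. if (2 * int n + 1) mod k = 0 then 0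
            else tan (pi * real_of_int h * (2 * real n + 1) / (2 * real_of_int k)) / (2 * real n + 1))"
  define x where "x j = pi * real_of_int (h * int j) / real_of_int k" for j :: nat
  define c where "c j = 2 / real K * (-1)^j * real j" for j :: nat
  define q where "q j = (h * int j) div k" for j :: nat
  have Texp: "T n = (\<Sum>j<K. c j * (sin ((2 * real n + 1) * x j) / (2 * real n + 1)))" for n
  proof (cases "(2 * int n + 1) mod k = 0")
    case True
    then obtain m where m: "2 * int n + 1 = k * m" by (auto simp: mod_eq_0_iff_dvd elim!: dvdE)
    have s0: "sin ((2 * real n + 1) * x j) = 0" for j
    proof -
      have "real_of_int (2 * int n + 1) = real_of_int (k * m)" using m by simp
      then have e: "2 * real n + 1 = real_of_int k * real_of_int m" by simp
      have "(2 * real n + 1) * x j = real_of_int (h * int j * m) * pi"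
        unfolding x_def e using assms(3) by (simp add: field_simps)
      then show ?thesis by (simp only: sin_int_pi)
    qed
    show ?thesis using True unfolding T_def by (simp add: s0)
  next
    case False
    define t where "t = pi * real_of_int h * (2 * real n + 1) / (2 * real_of_int k)"
    have ct: "cos t \<noteq> 0"
    proof
      assume "cos t = 0"
      then obtain i where i: "odd i" "t = real_of_int i * (pi/2)" by (auto simp: cos_zero_iff_int)
      then have "pi * real_of_int (h * (2 * int n + 1)) = pi * real_of_int (k * i)"
        unfolding t_def using assms(3) by (simp add: field_simps)
      then have "real_of_int (h * (2 * int n + 1)) = real_of_int (k * i)"
        by (simp only: mult_cancel_left pi_neq_zero simp_thms)
      then have "h * (2 * int n + 1) = k * i" by (simp only: of_int_eq_iff)
      then have "k dvd (2 * int n + 1) * h" by (metis dvd_triv_left mult.commute)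
      then have "k dvd 2 * int n + 1" using assms(4)
        by (metis coprime_commute coprime_dvd_mult_left_iff)
      then show False using False by (simp add: mod_eq_0_iff_dvd)
    qed
    have uK: "cis (2 * t) ^ K = -1"
    proof -
      have "cis (2*t)^K = cis (real K * (2 * t))" by (rule Complex.DeMoivre)
      also have "real K * (2 * t) = real_of_int (h * (2 * int n + 1)) * pi"
        unfolding t_def rk using K0 by (simp add: field_simps)
      also have "cis (real_of_int (h * (2 * int n + 1)) * pi) = -1"
      proof -
        have "odd (h * (2 * int n + 1))" using assms(1) by simp
        then have "cos (real_of_int (h * (2 * int n + 1)) * pi) = -1"
          by (simp only: cos_int_pi if_False)
        moreover have "sin (real_of_int (h * (2 * int n + 1)) * pi) = 0" by (rule sin_int_pi)
        ultimately show ?thesis by (simp only: complex_eq_iff cis.sel) simp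
      qed
      finally show ?thesis .
    qed
    have tf: "tan t = 2 / real K * (\<Sum>j<K. (-1)^j * real j * sin (2 * real j * t))"
      by (rule tan_finite[OF Kodd ct uK])
    have sj: "sin (2 * real j * t) = sin ((2 * real n + 1) * x j)" for j
    proof -
      have "2 * real j * t = (2 * real n + 1) * x j"
        unfolding t_def x_def using assms(3) by (simp add: field_simps)
      then show ?thesis by simp
    qed
    have "T n = tan t / (2 * real n + 1)" unfolding T_def t_def using False by simp
    also have "\<dots> = (\<Sum>j<K. c j * (sin ((2 * real n + 1) * x j) / (2 * real n + 1)))"
      unfolding tf sj c_def by (simp add: sum_distrib_left sum_divide_distrib mult.assoc)
    finally show ?thesis .
  qed
  have sums_j: "(\<lambda>n. c j * (sin ((2 * real n + 1) * x j) / (2 * real n + 1)))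
                 sums (c j * (real_of_int (esgn (q j)) * (pi/4)))" if "j \<in> {..<K}" for j
  proof (cases "j = 0")
    case True then show ?thesis unfolding c_def by simp
  next
    case False
    have nd: "\<not> k dvd h * int j"
    proof
      assume "k dvd h * int j"
      then have "k dvd int j" using assms(4) by (metis coprime_commute coprime_dvd_mult_right_iff)
      then have "k \<le> int j" using False by (simp add: zdvd_imp_le)
      then show False using that kK by simp
    qed
    show ?thesis unfolding x_def q_def by (rule sums_mult[OF sw_general[OF assms(3) nd]])
  qed
  have Teq: "T = (\<lambda>n. \<Sum>j<K. c j * (sin ((2 * real n + 1) * x j) / (2 * real n + 1)))"
    by (rule ext) (rule Texp)
  have Tsums: "T sums (\<Sum>j<K. c j * (real_of_int (esgn (q j)) * (pi/4)))"
    unfolding Teq by (rule sums_sum[OF sums_j])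
  define W where "W = (\<Sum>j<K. esgn (int j + q j) * int j)"
  have V: "(\<Sum>j<K. c j * (real_of_int (esgn (q j)) * (pi/4))) = pi / (2 * real K) * real_of_int W"
  proof -
    have h1: "c j * (real_of_int (esgn (q j)) * (pi/4)) = pi / (2 * real K) * real_of_int (esgn (int j + q j) * int j)" for j
    proof -
      have "(-1)^j * real_of_int (esgn (q j)) = real_of_int (esgn (int j + q j))"
        unfolding esgn_def by (cases "even j"; cases "even (q j)") auto
      then show ?thesis unfolding c_def by (simp add: field_simps)
    qed
    show ?thesis by (simp only: W_def of_int_sum sum_distrib_left h1)
  qed
  have B1eq: "B1 h k = (\<Sum>j<K. esgn (int j + q j) * q j)"
    unfolding q_def by (rule B1_as_nat_sum[OF kK K0])
  have idt: "2 * k * B1 h k = 2 * h * W + 1 - k"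
    unfolding B1eq W_def q_def by (rule B1_identity[OF assms kK])
  have fin: "real_of_int (B1 h k) = 2 * real_of_int h / pi * (pi / (2 * real K) * real_of_int W)
        + 1 / (2 * real_of_int k) - 1 / 2"
  proof -
    have "real_of_int (2 * k * B1 h k) = real_of_int (2 * h * W + 1 - k)" using idt by simp
    then have "2 * real K * real_of_int (B1 h k) = 2 * real_of_int h * real_of_int W + 1 - real K"
      using rk by simp
    then show ?thesis unfolding rk using K0 by (simp add: field_simps)
  qed
  show ?thesis
    using Tsums fin unfolding V T_def[symmetric]
    by (simp add: sums_summable sums_unique[symmetric])
qed


end
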